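(* For $n\ge0$ let $$P_n(z)=\frac{\imath^n}{2^n}\sum_{k=0}^n\binom{n}{k}\left(-\imath z+\tfrac12-k\right)_n$$ (the polynomial associated to the Weyl ordering $a_{n,k}=2^{-n}\binom nk$). Then, as polynomials in $z$, $$P_n(z)=\frac{n!}{(2\imath)^n}\,{}_3F_2\!\left(\begin{matrix}-n,\ n+1,\ \tfrac14-\tfrac{\imath z}{2}\\ \tfrac12,\ 1\end{matrix}\,\Big|\,1\right).$$
   Context: $\imath=\sqrt{-1}$; $(x)_n=x(x+1)\cdots(x+n-1)$. ${}_3F_2\!\left(\begin{smallmatrix}a_1,a_2,a_3\\ b_1,b_2\end{smallmatrix}\big|x\right)=\sum_{k\ge0}\frac{(a_1)_k(a_2)_k(a_3)_k}{(b_1)_k(b_2)_k}\frac{x^k}{k!}$ (a terminating sum here since $a_1=-n$). *)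

theory Defs
  imports Complex_Main
begin

text \<open>Generalized hypergeometric series 3F2 (formal sum over all k; it terminates
  when a1 is a non-positive integer, as in the application).\<close>
definition hyp3F2 :: "complex \<Rightarrow> complex \<Rightarrow> complex \<Rightarrow> complex \<Rightarrow> complex \<Rightarrow> complex \<Rightarrow> complex" where
  "hyp3F2 a1 a2 a3 b1 b2 x =
     (\<Sum>k. pochhammer a1 k * pochhammer a2 k * pochhammer a3 k
           / (pochhammer b1 k * pochhammer b2 k) * x ^ k / of_nat (fact k))"

definition P_weyl :: "nat \<Rightarrow> complex \<Rightarrow> complex" where
  "P_weyl n z = \<i> ^ n / 2 ^ n *
     (\<Sum>k=0..n. of_nat (n choose k) * pochhammer (- \<i> * z + 1/2 - of_nat k) n)"

end

theory Submission
  imports Defs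
begin

definition L :: "nat \<Rightarrow> complex \<Rightarrow> complex" where
  "L n x = (\<Sum>k\<le>n. of_nat (n choose k) * pochhammer (x - of_nat k) n)"

lemma pascal_sum:
  fixes g :: "nat \<Rightarrow> complex"
  shows "(\<Sum>k\<le>Suc m. of_nat (Suc m choose k) * g k) = (\<Sum>k\<le>m. of_nat (m choose k) * (g k + g (Suc k)))"
proof -
  have "(\<Sum>k\<le>Suc m. of_nat (Suc m choose k) * g k) = g 0 + (\<Sum>k\<le>m. of_nat (Suc m choose Suc k) * g (Suc k))"
    by (subst sum.atMost_Suc_shift) (simp del: sum.atMost_Suc)
  also have "\<dots> = g 0 + (\<Sum>k\<le>m. of_nat (m choose k) * g (Suc k)) + (\<Sum>k\<le>m. of_nat (m choose Suc k) * g (Suc k))"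
    by (simp add: sum.distrib distrib_right)
  also have "(\<Sum>k\<le>m. of_nat (m choose Suc k) * g (Suc k)) = (\<Sum>k\<le>Suc m. of_nat (m choose k) * g k) - g 0"
    by (subst sum.atMost_Suc_shift) (simp del: sum.atMost_Suc)
  also have "(\<Sum>k\<le>Suc m. of_nat (m choose k) * g k) = (\<Sum>k\<le>m. of_nat (m choose k) * g k)"
    by simp
  finally show ?thesis by (simp add: sum.distrib distrib_left)
qed

lemma absorb1:
  fixes f :: "nat \<Rightarrow> complex"
  shows "(\<Sum>k\<le>Suc p. of_nat (Suc p choose k) * of_nat k * f k) = of_nat (Suc p) * (\<Sum>k\<le>p. of_nat (p choose k) * f (Suc k))"
proof -
  have "(\<Sum>k\<le>Suc p. of_nat (Suc p choose k) * of_nat k * f k) = (\<Sum>k\<le>p. of_nat (Suc p choose Suc k) * of_nat (Suc k) * f (Suc k))"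
    by (subst sum.atMost_Suc_shift) (simp del: sum.atMost_Suc)
  also have "\<dots> = (\<Sum>k\<le>p. of_nat (Suc p) * (of_nat (p choose k) * f (Suc k)))"
  proof (rule sum.cong[OF refl])
    fix k
    have "Suc k * (Suc p choose Suc k) = Suc p * (p choose k)" using binomial_absorption[of k "Suc p"] by simp
    hence "(of_nat (Suc k) * of_nat (Suc p choose Suc k) :: complex) = of_nat (Suc p) * of_nat (p choose k)"
      by (metis of_nat_mult)
    thus "of_nat (Suc p choose Suc k) * of_nat (Suc k) * f (Suc k) = of_nat (Suc p) * (of_nat (p choose k) * f (Suc k))"
      by (simp add: algebra_simps)
  qed
  finally show ?thesis by (simp add: sum_distrib_left)
qed

lemma absorb2:
  fixes f :: "nat \<Rightarrow> complex"
  shows "(\<Sum>k\<le>Suc p. of_nat (Suc p choose k) * (of_nat (Suc p) - of_nat k) * f k) = of_nat (Suc p) * (\<Sum>k\<le>p. of_nat (p choose k) * f k)"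
proof -
  have "(\<Sum>k\<le>Suc p. of_nat (Suc p choose k) * (of_nat (Suc p) - of_nat k) * f k) = (\<Sum>k\<le>p. of_nat (Suc p choose k) * (of_nat (Suc p) - of_nat k) * f k)"
    by simp
  also have "\<dots> = (\<Sum>k\<le>p. of_nat (Suc p) * (of_nat (p choose k) * f k))"
  proof (rule sum.cong[OF refl])
    fix k assume "k \<in> {..p}"
    hence kp: "k \<le> Suc p" by simp
    have "(Suc p - k) * (Suc p choose k) = Suc p * (p choose k)" using binomial_absorb_comp[of "Suc p" k] by simp
    hence "(of_nat (Suc p - k) * of_nat (Suc p choose k) :: complex) = of_nat (Suc p) * of_nat (p choose k)"
      by (metis of_nat_mult)
    moreover have "(of_nat (Suc p - k) :: complex) = of_nat (Suc p) - of_nat k" using kp by (simp add: of_nat_diff)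
    ultimately show "of_nat (Suc p choose k) * (of_nat (Suc p) - of_nat k) * f k = of_nat (Suc p) * (of_nat (p choose k) * f k)"
      by (simp add: algebra_simps)
  qed
  finally show ?thesis by (simp add: sum_distrib_left)
qed

lemma L_rec:
  "L (Suc (Suc p)) x = (2*x - 1) * L (Suc p) x + of_nat (Suc p)^2 * L p x"
proof -
  define m where "m = Suc p"
  define f where "f k = pochhammer (x - of_nat k) m" for k
  have "L (Suc m) x = (\<Sum>k\<le>m. of_nat (m choose k) * (pochhammer (x - of_nat k) (Suc m) + pochhammer (x - of_nat (Suc k)) (Suc m)))"
    unfolding L_def by (rule pascal_sum)
  also have "\<dots> = (\<Sum>k\<le>m. of_nat (m choose k) * f k * ((2*x - 1) + (of_nat m - of_nat k) - of_nat k))"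
  proof (rule sum.cong[OF refl])
    fix k
    have h1: "pochhammer (x - of_nat k) (Suc m) = f k * (x - of_nat k + of_nat m)"
      unfolding f_def by (simp add: pochhammer_Suc)
    have h2: "pochhammer (x - of_nat (Suc k)) (Suc m) = (x - of_nat (Suc k)) * f k"
      unfolding f_def pochhammer_rec by (simp add: algebra_simps)
    show "of_nat (m choose k) * (pochhammer (x - of_nat k) (Suc m) + pochhammer (x - of_nat (Suc k)) (Suc m)) = of_nat (m choose k) * f k * ((2*x - 1) + (of_nat m - of_nat k) - of_nat k)"
      by (simp only: h1 h2) (simp add: algebra_simps)
  qed
  also have "\<dots> = (2*x-1) * (\<Sum>k\<le>m. of_nat (m choose k) * f k) + (\<Sum>k\<le>m. of_nat (m choose k) * (of_nat m - of_nat k) * f k) - (\<Sum>k\<le>m. of_nat (m choose k) * of_nat k * f k)"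
    by (simp add: sum_distrib_left sum.distrib sum_subtractf algebra_simps)
  also have "(\<Sum>k\<le>m. of_nat (m choose k) * (of_nat m - of_nat k) * f k) = of_nat m * (\<Sum>k\<le>p. of_nat (p choose k) * f k)"
    unfolding m_def by (rule absorb2)
  also have "(\<Sum>k\<le>m. of_nat (m choose k) * of_nat k * f k) = of_nat m * (\<Sum>k\<le>p. of_nat (p choose k) * f (Suc k))"
    unfolding m_def by (rule absorb1)
  also have "(2*x-1) * (\<Sum>k\<le>m. of_nat (m choose k) * f k) + of_nat m * (\<Sum>k\<le>p. of_nat (p choose k) * f k) - of_nat m * (\<Sum>k\<le>p. of_nat (p choose k) * f (Suc k))
      = (2*x-1) * (\<Sum>k\<le>m. of_nat (m choose k) * f k) + of_nat m * (\<Sum>k\<le>p. of_nat (p choose k) * (f k - f (Suc k)))"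
    by (simp add: sum_subtractf algebra_simps)
  also have "(\<Sum>k\<le>p. of_nat (p choose k) * (f k - f (Suc k))) = of_nat m * L p x"
    unfolding L_def sum_distrib_left
  proof (rule sum.cong[OF refl])
    fix k
    have h1: "f k = pochhammer (x - of_nat k) p * (x - of_nat k + of_nat p)"
      unfolding f_def m_def by (simp add: pochhammer_Suc)
    have h2: "f (Suc k) = (x - of_nat (Suc k)) * pochhammer (x - of_nat k) p"
      unfolding f_def m_def pochhammer_rec by (simp add: algebra_simps)
    show "of_nat (p choose k) * (f k - f (Suc k)) = of_nat m * (of_nat (p choose k) * pochhammer (x - of_nat k) p)"
      unfolding m_def by (simp only: h1 h2) (simp add: algebra_simps)
  qed
  finally show ?thesis unfolding m_def[symmetric] f_def L_def by (simp add: power2_eq_square algebra_simps)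
qed

definition A :: "nat \<Rightarrow> nat \<Rightarrow> complex" where
  "A n j = (-1)^j * of_nat ((2*j) choose j) * of_nat ((n+j) choose (2*j))"

lemma A_zero: "j > n \<Longrightarrow> A n j = 0"
  unfolding A_def by simp

lemma absorb_step:
  "(of_nat (Suc k) :: complex) * of_nat (n choose Suc k) = (of_nat n - of_nat k) * of_nat (n choose k)"
proof (cases "k \<le> n")
  case True
  have "Suc k * (n choose Suc k) = (n - k) * (n choose k)"
    using binomial_absorption[of k n] binomial_absorb_comp[of n k] by simp
  hence "(of_nat (Suc k * (n choose Suc k)) :: complex) = of_nat ((n - k) * (n choose k))" by simp
  thus ?thesis using True by (simp add: of_nat_diff algebra_simps del: binomial_Suc_Suc)
next
  case False
  hence h1: "n choose k = 0" and h2: "n choose Suc k = 0" by simp_all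
  show ?thesis by (simp only: h1 h2 of_nat_0 mult_zero_right)
qed

lemma central_nat:
  "Suc i * ((2*Suc i) choose Suc i) = 2 * (2 * i + 1) * ((2*i) choose i)"
proof -
  have e1: "Suc i * ((2*Suc i) choose Suc i) = (2*Suc i) * (Suc (2*i) choose i)"
    using binomial_absorption[of i "2*Suc i"] by (simp del: binomial_Suc_Suc)
  have e2: "Suc (2*i) choose i = Suc (2*i) choose Suc i"
    by (subst binomial_symmetric) auto
  have e3: "Suc i * (Suc (2*i) choose Suc i) = Suc (2*i) * ((2*i) choose i)"
    using binomial_absorption[of i "Suc (2*i)"] by (simp del: binomial_Suc_Suc)
  have "Suc i * (Suc i * ((2*Suc i) choose Suc i)) = (2*Suc i) * (Suc i * (Suc (2*i) choose Suc i))"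
    by (simp only: e1 e2 mult.left_commute)
  also have "\<dots> = Suc i * (2 * (2 * i + 1) * ((2*i) choose i))"
    by (simp only: e3) (simp del: binomial_Suc_Suc)
  finally show ?thesis using mult_left_cancel[of "Suc i"] by blast
qed

lemma central:
  "(of_nat (Suc i) :: complex) * of_nat ((2*Suc i) choose Suc i) = 2 * (2 * of_nat i + 1) * of_nat ((2*i) choose i)"
proof -
  have "(of_nat (Suc i * ((2*Suc i) choose Suc i)) :: complex) = of_nat (2 * (2 * i + 1) * ((2*i) choose i))"
    by (simp only: central_nat)
  thus ?thesis by (simp only: of_nat_mult of_nat_add of_nat_numeral of_nat_1)
qed

lemma coeff_id:
  "of_nat (Suc (Suc p)) * A (Suc (Suc p)) j = (1 + 4 * of_nat j) * A (Suc p) j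
     - (if j = 0 then 0 else (4 * of_nat j - 2) * A (Suc p) (j - 1)) + of_nat (Suc p) * A p j"
proof (cases j)
  case 0 thus ?thesis by (simp add: A_def)
next
  case (Suc i)
  define m where "m = Suc p"
  define N where "N = m + i"
  define Q where "Q = (of_nat ((2*Suc i) choose Suc i) :: complex)"
  define D where "D = (of_nat ((2*i) choose i) :: complex)"
  define X where "X = (of_nat (N choose (2*i)) :: complex)"
  define Y where "Y = (of_nat (N choose Suc (2*i)) :: complex)"
  define Z where "Z = (of_nat (N choose Suc (Suc (2*i))) :: complex)"
  have QD: "of_nat (Suc i) * Q = 2 * (2 * of_nat i + 1) * D" unfolding Q_def D_def by (rule central)
  have XY: "(2 * of_nat i + 1) * Y = (of_nat m - of_nat i) * X"
    using absorb_step[of "2*i" N] unfolding X_def Y_def N_def by (simp add: algebra_simps)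
  have YZ: "(2 * of_nat i + 2) * Z = (of_nat m - of_nat i - 1) * Y"
    using absorb_step[of "Suc (2*i)" N] unfolding Z_def Y_def N_def by (simp add: algebra_simps)
  have a1: "A (Suc m) j = (-1)^Suc i * Q * (Z + 2*Y + X)"
  proof -
    have "Suc m + j = Suc (Suc N)" "2 * j = Suc (Suc (2*i))" using Suc N_def by auto
    thus ?thesis unfolding A_def Q_def X_def Y_def Z_def using Suc by (simp add: algebra_simps)
  qed
  have a2: "A m j = (-1)^Suc i * Q * (Z + Y)"
  proof -
    have "m + j = Suc N" "2 * j = Suc (Suc (2*i))" using Suc N_def by auto
    thus ?thesis unfolding A_def Q_def X_def Y_def Z_def using Suc by (simp add: algebra_simps)
  qed
  have a3: "A m (j - 1) = (-1)^i * D * X"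
    unfolding A_def D_def X_def N_def using Suc by simp
  have a4: "A p j = (-1)^Suc i * Q * Z"
  proof -
    have "p + j = N" "2 * j = Suc (Suc (2*i))" using Suc N_def m_def by auto
    thus ?thesis unfolding A_def Q_def Z_def using Suc by (simp add: algebra_simps)
  qed
  have key: "(of_nat m + 1) * (-1) * Q * (Z + 2*Y + X) = (4 * of_nat i + 5) * (-1) * Q * (Z + Y)
     - (4 * of_nat i + 2) * D * X + of_nat m * (-1) * Q * Z"
  proof -
    have "of_nat (Suc i) * ((of_nat m + 1) * (-1) * Q * (Z + 2*Y + X)) = of_nat (Suc i) * ((4 * of_nat i + 5) * (-1) * Q * (Z + Y)
     - (4 * of_nat i + 2) * D * X + of_nat m * (-1) * Q * Z)"
      using QD XY YZ by simp algebra
    thus ?thesis by (metis mult_cancel_left of_nat_eq_0_iff nat.distinct(1))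
  qed
  have goal': "of_nat (Suc m) * A (Suc m) j = (1 + 4 * of_nat j) * A m j - (4 * of_nat j - 2) * A m (j - 1) + of_nat m * A p j"
  proof -
    have gen: "(1 + of_nat m) * (- 1 * s * Q * (Z + 2 * Y + X)) =
     (1 + 4 * (1 + of_nat i)) * (- 1 * s * Q * (Z + Y)) -
     (4 * (1 + of_nat i) - 2) * (s * D * X) + of_nat m * (- 1 * s * Q * Z)" for s :: complex
    proof -
      have "s * ((of_nat m + 1) * - 1 * Q * (Z + 2 * Y + X)) = s * ((4 * of_nat i + 5) * - 1 * Q * (Z + Y) -
         (4 * of_nat i + 2) * D * X + of_nat m * - 1 * Q * Z)" using key by simp
      thus ?thesis by (simp add: algebra_simps)
    qed
    show ?thesis unfolding a1 a2 a3 a4 unfolding Suc of_nat_Suc power_Suc by (rule gen)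
  qed
  show ?thesis using goal' Suc unfolding m_def by simp
qed

definition B :: "complex \<Rightarrow> nat \<Rightarrow> complex" where
  "B y j = pochhammer y j / pochhammer (1/2) j"

definition G :: "nat \<Rightarrow> complex \<Rightarrow> complex" where
  "G n y = (\<Sum>j\<le>n. A n j * B y j)"

lemma half_poch_nz: "pochhammer (1/2 :: complex) j \<noteq> 0"
proof
  assume "pochhammer (1/2 :: complex) j = 0"
  then obtain k where "(1/2 :: complex) = - of_nat k" by (auto simp: pochhammer_eq_0_iff)
  hence "Re (1/2 :: complex) = Re (- of_nat k)" by (rule arg_cong)
  hence "(1/2::real) = - real k" by simp
  thus False by linarith
qed

lemma B_step: "(1 - 4*y) * B y j = (1 + 4 * of_nat j) * B y j - (4 * of_nat j + 2) * B y (Suc j)"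
proof -
  have nz: "pochhammer (1/2 :: complex) j \<noteq> 0" by (rule half_poch_nz)
  have nz2: "(1/2 :: complex) + of_nat j \<noteq> 0"
  proof
    assume "(1/2 :: complex) + of_nat j = 0"
    hence "Re ((1/2 :: complex) + of_nat j) = Re 0" by (rule arg_cong)
    hence "(1/2::real) + real j = 0" by simp
    thus False by linarith
  qed
  have "(4 * of_nat j + 2) * B y (Suc j) = 4 * (y + of_nat j) * B y j"
  proof -
    define r where "r = (1/2 :: complex) + of_nat j"
    have r4: "(4 * of_nat j + 2 :: complex) = 4 * r" unfolding r_def by simp
    have rnz: "r \<noteq> 0" unfolding r_def by (rule nz2)
    have "(1/2 :: complex) + of_nat j = r" unfolding r_def ..
    hence bs: "B y (Suc j) = pochhammer y j * (y + of_nat j) / (pochhammer (1/2) j * r)"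
      unfolding B_def pochhammer_Suc by simp
    show ?thesis unfolding bs r4 unfolding B_def using nz rnz by (simp add: field_simps)
  qed
  thus ?thesis by (simp add: algebra_simps)
qed

lemma A_ext: "n \<le> N \<Longrightarrow> (\<Sum>j\<le>N. A n j * h j) = (\<Sum>j\<le>n. A n j * h j)"
  by (rule sum.mono_neutral_right) (auto simp: A_zero)

lemma G_rec:
  "of_nat (Suc (Suc p)) * G (Suc (Suc p)) y = (1 - 4*y) * G (Suc p) y + of_nat (Suc p) * G p y"
proof -
  define m where "m = Suc p"
  define c where "c j = (if j = 0 then 0 else (4 * of_nat j - 2) * A m (j - 1))" for j
  have "of_nat (Suc m) * G (Suc m) y = (\<Sum>j\<le>Suc m. (of_nat (Suc m) * A (Suc m) j) * B y j)"
    unfolding G_def by (simp add: sum_distrib_left algebra_simps)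
  also have "\<dots> = (\<Sum>j\<le>Suc m. ((1 + 4 * of_nat j) * A m j - c j + of_nat m * A p j) * B y j)"
    unfolding m_def c_def using coeff_id by simp
  also have "\<dots> = (\<Sum>j\<le>Suc m. A m j * ((1 + 4 * of_nat j) * B y j)) - (\<Sum>j\<le>Suc m. c j * B y j) + of_nat m * (\<Sum>j\<le>Suc m. A p j * B y j)"
    by (simp add: sum.distrib sum_subtractf sum_distrib_left algebra_simps)
  also have "(\<Sum>j\<le>Suc m. A m j * ((1 + 4 * of_nat j) * B y j)) = (\<Sum>j\<le>m. A m j * ((1 + 4 * of_nat j) * B y j))"
    by (rule A_ext) simp
  also have "(\<Sum>j\<le>Suc m. A p j * B y j) = G p y"
    unfolding G_def by (rule A_ext) (simp add: m_def)
  also have "(\<Sum>j\<le>Suc m. c j * B y j) = (\<Sum>j\<le>m. A m j * ((4 * of_nat j + 2) * B y (Suc j)))"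
    by (subst sum.atMost_Suc_shift) (simp add: c_def algebra_simps del: sum.atMost_Suc)
  also have "(\<Sum>j\<le>m. A m j * ((1 + 4 * of_nat j) * B y j)) - (\<Sum>j\<le>m. A m j * ((4 * of_nat j + 2) * B y (Suc j)))
      = (\<Sum>j\<le>m. A m j * ((1 + 4 * of_nat j) * B y j - (4 * of_nat j + 2) * B y (Suc j)))"
    by (simp add: sum_subtractf right_diff_distrib)
  also have "\<dots> = (\<Sum>j\<le>m. A m j * ((1 - 4*y) * B y j))"
    by (simp only: B_step)
  also have "\<dots> = (1 - 4*y) * G m y"
    unfolding G_def by (simp add: sum_distrib_left algebra_simps)
  finally show ?thesis unfolding m_def by simp
qed

lemma term_eq:
  "pochhammer (- of_nat n) k * pochhammer (of_nat n + 1) k * pochhammer y k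
     / (pochhammer (1/2) k * pochhammer 1 k) * 1 ^ k / of_nat (fact k) = A n k * B y k"
proof -
  have p1: "pochhammer (- of_nat n :: complex) k = (-1)^k * fact k * of_nat (n choose k)"
  proof -
    have h: "fact k * (of_nat n gchoose k) = (-1)^k * pochhammer (- of_nat n :: complex) k"
      using gbinomial_pochhammer[of "of_nat n :: complex" k] by (simp add: field_simps)
    have "(-1)^k * (fact k * (of_nat n gchoose k)) = ((-1)^k * (-1)^k) * pochhammer (- of_nat n :: complex) k"
      unfolding h by (simp only: mult.assoc)
    thus ?thesis by (simp add: binomial_gbinomial mult.assoc)
  qed
  have p2: "pochhammer (of_nat n + 1 :: complex) k = fact k * of_nat ((n+k) choose k)"
    using gbinomial_pochhammer'[of "of_nat (n+k) :: complex" k] by (simp add: binomial_gbinomial field_simps)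
  have p3: "pochhammer (1 :: complex) k = fact k" by (simp add: pochhammer_fact)
  have cm: "(n choose k) * ((n+k) choose k) = ((2*k) choose k) * ((n+k) choose (2*k))"
  proof (cases "k \<le> n")
    case True
    have "((n+k) choose (2*k)) * ((2*k) choose k) = ((n+k) choose k) * ((n + k - k) choose (2*k - k))"
      by (rule choose_mult) (use True in auto)
    thus ?thesis by (simp add: mult_2 mult.commute)
  next
    case False
    hence z2: "(n + k) choose (2*k) = 0" by (intro binomial_eq_0) simp
    have z1: "n choose k = 0" using False by (intro binomial_eq_0) simp
    show ?thesis by (simp only: z1 z2 mult_0 mult_0_right)
  qed
  have cm': "(of_nat (n choose k) :: complex) * of_nat ((n+k) choose k) = of_nat ((2*k) choose k) * of_nat ((n+k) choose (2*k))"
    using arg_cong[OF cm, of "of_nat :: nat \<Rightarrow> complex"] by simp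
  have nz: "pochhammer (1/2 :: complex) k \<noteq> 0" by (rule half_poch_nz)
  show ?thesis unfolding p1 p2 p3 A_def B_def using nz cm'
    by (simp add: field_simps)
qed

lemma hyp_eq: "hyp3F2 (- of_nat n) (of_nat n + 1) y (1/2) 1 1 = G n y"
proof -
  have "(\<lambda>k. A n k * B y k) sums (\<Sum>k\<in>{..n}. A n k * B y k)"
    by (rule sums_finite) (auto simp: A_zero)
  thus ?thesis unfolding hyp3F2_def G_def term_eq by (simp add: sums_iff)
qed

lemma L_G: "L n x = (-1)^n * fact n * G n (x/2)"
proof (induction n rule: less_induct)
  case (less n)
  show ?case
  proof (cases n)
    case 0 thus ?thesis by (simp add: L_def G_def A_def B_def)
  next
    case (Suc q)
    show ?thesis
    proof (cases q)
      case 0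
      thus ?thesis using Suc by (simp add: L_def G_def A_def B_def algebra_simps)
    next
      case (Suc p)
      have IH1: "L (Suc p) x = (-1)^Suc p * fact (Suc p) * G (Suc p) (x/2)" using less \<open>n = Suc q\<close> Suc by simp
      have IH2: "L p x = (-1)^p * fact p * G p (x/2)" using less \<open>n = Suc q\<close> Suc by simp
      have "L n x = (2*x - 1) * L (Suc p) x + of_nat (Suc p)^2 * L p x"
        using \<open>n = Suc q\<close> Suc L_rec by simp
      also have "\<dots> = (-1)^p * fact (Suc p) * ((1 - 4*(x/2)) * G (Suc p) (x/2) + of_nat (Suc p) * G p (x/2))"
        unfolding IH1 IH2 by (simp add: algebra_simps power2_eq_square)
      also have "\<dots> = (-1)^p * fact (Suc p) * (of_nat (Suc (Suc p)) * G (Suc (Suc p)) (x/2))"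
        by (simp only: G_rec)
      also have "\<dots> = (-1)^n * fact n * G n (x/2)"
        using \<open>n = Suc q\<close> Suc by (simp add: algebra_simps)
      finally show ?thesis .
    qed
  qed
qed

theorem mainTheorem15:
  fixes n :: nat and z :: complex
  shows "P_weyl n z = of_nat (fact n) / (2 * \<i>) ^ n *
           hyp3F2 (- of_nat n) (of_nat n + 1) (1/4 - \<i> * z / 2) (1/2) 1 1"
proof -
  define x where "x = - \<i> * z + 1/2"
  have Px: "P_weyl n z = \<i> ^ n / 2 ^ n * L n x"
    unfolding P_weyl_def L_def x_def by (simp add: atLeast0AtMost)
  have y: "1/4 - \<i> * z / 2 = x / 2" unfolding x_def by (simp add: field_simps)
  have ii: "\<i> ^ n * \<i> ^ n * (-1) ^ n = (1::complex)"
  proof -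
    have "\<i> ^ n * \<i> ^ n * (-1) ^ n = (\<i> * \<i> * (-1::complex)) ^ n" by (simp only: power_mult_distrib)
    also have "\<dots> = 1" by simp
    finally show ?thesis .
  qed
  show ?thesis unfolding Px y hyp_eq L_G
  proof -
    have "\<i> ^ n / 2 ^ n * ((- 1) ^ n * fact n * G n (x / 2)) = (\<i> ^ n * \<i> ^ n * (-1) ^ n) * fact n / (2 * \<i>) ^ n * G n (x / 2)"
      by (simp add: power_mult_distrib field_simps)
    thus "\<i> ^ n / 2 ^ n * ((- 1) ^ n * fact n * G n (x / 2)) = of_nat (fact n) / (2 * \<i>) ^ n * G n (x / 2)"
      using ii by simp
  qed
qed

end
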